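(* Let $X$ be finite and $t$ any transition function. Then $t$ is menu invariant, i.e. there exists $\nu\in\Delta(\mathcal{L}(X))$ with $\nu M_A=\nu$ for all $A\in\mathcal{X}_2$, if and only if $t$ satisfies no weak investment: for every investment plan $i$ there exists $\succ\in\mathcal{L}(X)$ with $$\sum_{(A,\succ')\in\mathcal{X}_2\times\mathcal{L}(X)} i(A,\succ')\,t_{\succ'}(M(\succ,A),\succ)\le\sum_{A\in\mathcal{X}_2}i(A,\succ).$$
   Context: $\mathcal{X}_2$ is the collection of subsets of $X$ with at least two elements, $\mathcal{L}(X)$ the linear orders on $X$, $M(\succ,A)$ the $\succ$-maximal element of $A$. A transition function is $t:X\times\mathcal{L}(X)\to\Delta(\mathcal{L}(X))$, with $t_{\succ'}(x,\succ)$ the probability of $\succ'$ under $t(x,\succ)$. For $A\in\mathcal{X}_2$, $M_A$ is the Markov matrix on $\mathcal{L}(X)$ with entries $m_A(\succ,\succ')=t_{\succ'}(M(\succ,A),\succ)$; distributions are row vectors. An investment plan is any function $i:\mathcal{X}_2\times\mathcal{L}(X)\to\mathbb{R}_{\ge0}$. *)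

theory Defs
  imports "HOL-Probability.Probability"
begin

text \<open>Linear orders on X (a finite type 'a), as strict linear orders;
  (x, y) \<in> r means x \<succ> y.\<close>
definition linorders :: "'a rel set" where
  "linorders = {r. strict_linear_order r}"

definition menus2 :: "'a set set" where
  "menus2 = {A. 2 \<le> card A}"

definition maxel :: "'a rel \<Rightarrow> 'a set \<Rightarrow> 'a" where
  "maxel r A = (THE x. x \<in> A \<and> (\<forall>y\<in>A. y \<noteq> x \<longrightarrow> (x, y) \<in> r))"

definition transition_fun :: "('a \<Rightarrow> 'a rel \<Rightarrow> 'a rel pmf) \<Rightarrow> bool" where
  "transition_fun t = (\<forall>x r. r \<in> linorders \<longrightarrow> set_pmf (t x r) \<subseteq> linorders)"

definition markov_entry :: "('a \<Rightarrow> 'a rel \<Rightarrow> 'a rel pmf) \<Rightarrow> 'a set \<Rightarrow> 'a rel \<Rightarrow> 'a rel \<Rightarrow> real" where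
  "markov_entry t A r r' = pmf (t (maxel r A) r) r'"

definition menu_invariant :: "('a \<Rightarrow> 'a rel \<Rightarrow> 'a rel pmf) \<Rightarrow> bool" where
  "menu_invariant t = (\<exists>\<nu> :: 'a rel pmf. set_pmf \<nu> \<subseteq> linorders \<and>
     (\<forall>A\<in>menus2. \<forall>r'\<in>linorders.
        (\<Sum>r\<in>linorders. pmf \<nu> r * markov_entry t A r r') = pmf \<nu> r'))"

definition investment_plan :: "('a set \<Rightarrow> 'a rel \<Rightarrow> real) \<Rightarrow> bool" where
  "investment_plan i = (\<forall>A\<in>menus2. \<forall>r\<in>linorders. 0 \<le> i A r)"

definition no_weak_investment :: "('a \<Rightarrow> 'a rel \<Rightarrow> 'a rel pmf) \<Rightarrow> bool" where
  "no_weak_investment t = (\<forall>i. investment_plan i \<longrightarrow>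
     (\<exists>r\<in>linorders.
        (\<Sum>A\<in>menus2. \<Sum>r'\<in>linorders. i A r' * markov_entry t A r r')
          \<le> (\<Sum>A\<in>menus2. i A r)))"

end

theory Submission
  imports Defs
begin

lemma pos_scale_le:
  fixes x b :: real
  assumes "\<And>k. k > 0 \<Longrightarrow> k * x \<le> b"
  shows "x \<le> 0"
proof (rule ccontr)
  assume "\<not> x \<le> 0"
  hence x: "x > 0" by simp
  have "(\<bar>b\<bar> + 1) / x * x \<le> b" using assms[of "(\<bar>b\<bar> + 1) / x"] x by simp
  thus False using x by simp
qed

lemma forward:
  fixes t :: "'a::finite \<Rightarrow> 'a rel \<Rightarrow> 'a rel pmf"
  assumes "menu_invariant t"
  shows "no_weak_investment t"
  unfolding no_weak_investment_def
proof (intro allI impI)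
  fix i :: "'a set \<Rightarrow> 'a rel \<Rightarrow> real"
  assume ip: "investment_plan i"
  obtain \<nu> where sub: "set_pmf \<nu> \<subseteq> linorders" and
    inv: "\<And>A r'. A \<in> menus2 \<Longrightarrow> r' \<in> linorders \<Longrightarrow>
        (\<Sum>r\<in>linorders. pmf \<nu> r * markov_entry t A r r') = pmf \<nu> r'"
    using assms unfolding menu_invariant_def by blast
  define L where "L = (linorders :: 'a rel set)"
  define m where "m = markov_entry t"
  define LHS where "LHS r = (\<Sum>A\<in>menus2. \<Sum>r'\<in>L. i A r' * m A r r')" for r
  define RHS where "RHS r = (\<Sum>A\<in>menus2. i A r)" for r
  show "\<exists>r\<in>linorders. (\<Sum>A\<in>menus2. \<Sum>r'\<in>linorders. i A r' * markov_entry t A r r')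
          \<le> (\<Sum>A\<in>menus2. i A r)"
  proof (rule ccontr)
    assume "\<not> ?thesis"
    hence lt: "\<forall>r\<in>L. RHS r < LHS r" unfolding L_def LHS_def RHS_def m_def by auto
    obtain r1 where r1: "r1 \<in> set_pmf \<nu>" using set_pmf_not_empty by fastforce
    have r1L: "r1 \<in> L" using r1 sub L_def by auto
    have p1: "pmf \<nu> r1 > 0" using r1 by (simp add: pmf_positive)
    have "(\<Sum>r\<in>L. pmf \<nu> r * RHS r) < (\<Sum>r\<in>L. pmf \<nu> r * LHS r)"
    proof (rule sum_strict_mono_ex1)
      show "finite L" by simp
      show "\<forall>x\<in>L. pmf \<nu> x * RHS x \<le> pmf \<nu> x * LHS x"
        using lt by (meson less_imp_le mult_left_mono pmf_nonneg)
      show "\<exists>a\<in>L. pmf \<nu> a * RHS a < pmf \<nu> a * LHS a"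
        using lt r1L p1 by (meson mult_strict_left_mono)
    qed
    also have "(\<Sum>r\<in>L. pmf \<nu> r * LHS r)
        = (\<Sum>r\<in>L. \<Sum>A\<in>menus2. \<Sum>r'\<in>L. i A r' * (pmf \<nu> r * m A r r'))"
      unfolding LHS_def by (simp add: sum_distrib_left algebra_simps)
    also have "\<dots> = (\<Sum>A\<in>menus2. \<Sum>r'\<in>L. \<Sum>r\<in>L. i A r' * (pmf \<nu> r * m A r r'))"
      by (rule trans[OF sum.swap], rule sum.cong[OF refl], rule sum.swap)
    also have "\<dots> = (\<Sum>A\<in>menus2. \<Sum>r'\<in>L. i A r' * (\<Sum>r\<in>L. pmf \<nu> r * m A r r'))"
      by (simp add: sum_distrib_left)
    also have "\<dots> = (\<Sum>A\<in>menus2. \<Sum>r'\<in>L. i A r' * pmf \<nu> r')"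
      using inv unfolding L_def m_def by (intro sum.cong refl) auto
    also have "\<dots> = (\<Sum>r\<in>L. pmf \<nu> r * RHS r)"
      unfolding RHS_def sum_distrib_left
      by (rule trans[OF sum.swap], intro sum.cong refl) (simp add: algebra_simps)
    finally show False by simp
  qed
qed


lemma backward:
  fixes t :: "'a::finite \<Rightarrow> 'a rel \<Rightarrow> 'a rel pmf"
  assumes tf: "transition_fun t" and nwi: "no_weak_investment t"
  shows "menu_invariant t"
proof -
  define L where "L = (linorders :: 'a rel set)"
  define m where "m = markov_entry t"
  define F where "F i r = (\<Sum>A\<in>menus2. i A r) - (\<Sum>A\<in>menus2. \<Sum>r'\<in>L. i A r' * m A r r')"
    for i :: "'a set \<Rightarrow> 'a rel \<Rightarrow> real" and r
  have nwi': "\<exists>r\<in>L. 0 \<le> F i r" if "investment_plan i" for i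
    using nwi that unfolding no_weak_investment_def F_def L_def m_def by fastforce
  have Flin: "F (\<lambda>A r. u * i A r + v * j A r) r = u * F i r + v * F j r" for u v i j r
    unfolding F_def by (simp add: sum.distrib sum_distrib_left algebra_simps)
  have F0: "F (\<lambda>A r. 0) r = 0" for r unfolding F_def by simp
  define C :: "(real ^ ('a rel)) set" where
    "C = {v. \<exists>i. investment_plan i \<and> (\<forall>r\<in>L. v$r = F i r)}"
  define N :: "(real ^ ('a rel)) set" where "N = {v. \<forall>r. v$r < 0}"
  have "convex C"
    unfolding convex_def
  proof (intro ballI allI impI)
    fix x y :: "real ^ ('a rel)" and u v :: real
    assume "x \<in> C" "y \<in> C" and uv: "0 \<le> u" "0 \<le> v" "u + v = 1"
    then obtain i j where i: "investment_plan i" "\<forall>r\<in>L. x$r = F i r"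
      and j: "investment_plan j" "\<forall>r\<in>L. y$r = F j r" unfolding C_def by blast
    have "investment_plan (\<lambda>A r. u * i A r + v * j A r)"
      using i(1) j(1) uv unfolding investment_plan_def by simp
    moreover have "\<forall>r\<in>L. (u *\<^sub>R x + v *\<^sub>R y)$r = F (\<lambda>A r. u * i A r + v * j A r) r"
      using i(2) j(2) by (simp add: Flin)
    ultimately show "u *\<^sub>R x + v *\<^sub>R y \<in> C" unfolding C_def by blast
  qed
  have "convex N"
    unfolding convex_def N_def
  proof (intro ballI allI impI CollectI)
    fix x y :: "real ^ ('a rel)" and u v :: real and r
    assume x: "x \<in> {v. \<forall>r. v $ r < 0}" and y: "y \<in> {v. \<forall>r. v $ r < 0}"
      and uv: "0 \<le> u" "0 \<le> v" "u + v = 1"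
    have "x$r < 0" "y$r < 0" using x y by auto
    hence "u * x$r + v * y$r < 0" using uv
      by (smt (verit) mult_nonneg_nonpos mult_pos_neg)
    thus "(u *\<^sub>R x + v *\<^sub>R y) $ r < 0" by simp
  qed
  have ip0: "investment_plan (\<lambda>A r. 0)" unfolding investment_plan_def by simp
  have C0: "0 \<in> C" unfolding C_def using ip0 F0 by force
  have "(\<chi> r. -1) \<in> N" unfolding N_def by simp
  hence "N \<noteq> {}" by blast
  have "C \<inter> N = {}"
  proof (rule ccontr)
    assume "C \<inter> N \<noteq> {}"
    then obtain v :: "real ^ ('a rel)" and i where vi: "investment_plan i" "\<forall>r\<in>L. v$r = F i r" "\<forall>r. v$r < 0"
      unfolding C_def N_def by blast
    obtain r where r: "r \<in> L" "0 \<le> F i r" using nwi' vi(1) by blast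
    have "v$r = F i r" using vi(2) r(1) by blast
    moreover have "v$r < 0" using vi(3) by blast
    ultimately show False using r(2) by linarith
  qed
  obtain a b where a0: "a \<noteq> 0" and aC: "\<forall>x\<in>C. a \<bullet> x \<le> b" and aN: "\<forall>x\<in>N. b \<le> a \<bullet> x"
    using separating_hyperplane_sets[OF \<open>convex C\<close> \<open>convex N\<close> _ \<open>N \<noteq> {}\<close> \<open>C \<inter> N = {}\<close>] C0
    by blast
  have b0: "0 \<le> b" using aC C0 by force
  have offL: "a$r0 = 0" if "r0 \<notin> L" for r0
  proof -
    have "k * a$r0 \<le> b" for k
    proof -
      have "(\<chi> r. if r = r0 then k else 0) \<in> C"
        unfolding C_def using ip0 F0 that by force
      hence "a \<bullet> (\<chi> r. if r = r0 then k else 0) \<le> b" using aC by blast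
      moreover have "a \<bullet> (\<chi> r. if r = r0 then k else 0) = k * a$r0"
        unfolding inner_vec_def by (simp add: if_distrib cong: if_cong)
      ultimately show ?thesis by simp
    qed
    from this[of "(\<bar>b\<bar> + 1) / a$r0"] show ?thesis
      by (cases "a$r0 = 0") auto
  qed
  have nonpos: "a$r1 \<le> 0" for r1
  proof (rule ccontr)
    assume "\<not> a$r1 \<le> 0"
    hence ap: "a$r1 > 0" by simp
    define S where "S = (\<Sum>r\<in>UNIV. a$r)"
    define K where "K = 1 + (\<bar>S\<bar> + 1) / a$r1"
    have K1: "K > 1" unfolding K_def using ap by (simp add: add_pos_pos)
    define n :: "real ^ ('a rel)" where "n = (\<chi> r. if r = r1 then -K else -1)"
    have "n \<in> N" unfolding N_def n_def using K1 by auto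
    hence "b \<le> a \<bullet> n" using aN by blast
    moreover have "a \<bullet> n = (\<Sum>r\<in>UNIV. - a$r + (if r = r1 then (1 - K) * a$r else 0))"
      unfolding inner_vec_def n_def by (intro sum.cong refl) (auto simp: algebra_simps)
    moreover have "\<dots> = - S + (1 - K) * a$r1"
      unfolding S_def by (simp add: sum.distrib sum_negf sum_subtractf)
    moreover have "(1 - K) * a$r1 = - (\<bar>S\<bar> + 1)" unfolding K_def using ap
      by (simp add: field_simps)
    ultimately show False using b0 by linarith
  qed
  define \<nu> where "\<nu> r = - a$r" for r
  have nu0: "\<nu> r \<ge> 0" for r unfolding \<nu>_def using nonpos[of r] by simp
  have rowsum: "(\<Sum>r0\<in>L. m A r r0) = 1" if "r \<in> L" for A r
    unfolding m_def markov_entry_def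
    by (rule sum_pmf_eq_1) (use tf that in \<open>auto simp: transition_fun_def L_def\<close>)
  have ineq: "(\<Sum>r\<in>L. \<nu> r * m A r r0) \<le> \<nu> r0" if A: "A \<in> menus2" and r0: "r0 \<in> L" for A r0
  proof -
    have "k * (a$r0 - (\<Sum>r\<in>L. a$r * m A r r0)) \<le> b" if k: "k > 0" for k
    proof -
      define i where "i A' r' = (if A' = A \<and> r' = r0 then k else 0)" for A' r'
      have ip: "investment_plan i" unfolding investment_plan_def i_def using k by auto
      have Fi: "F i r = (if r = r0 then k else 0) - k * m A r r0" for r
      proof -
        have s1: "(\<Sum>A'\<in>menus2. i A' r) = (if r = r0 then k else 0)"
          by (cases "r = r0") (simp_all add: i_def A)
        have inner: "(\<Sum>r'\<in>L. i A' r' * m A' r r') = (if A' = A then k * m A r r0 else 0)" for A'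
        proof -
          have "(\<Sum>r'\<in>L. i A' r' * m A' r r') = (\<Sum>r'\<in>L. if r' = r0 then (if A' = A then k * m A r r0 else 0) else 0)"
            unfolding i_def by (intro sum.cong refl) auto
          also have "\<dots> = (if A' = A then k * m A r r0 else 0)" using r0 by simp
          finally show ?thesis .
        qed
        have s2: "(\<Sum>A'\<in>menus2. \<Sum>r'\<in>L. i A' r' * m A' r r') = k * m A r r0"
          unfolding inner using A by simp
        show ?thesis unfolding F_def s1 s2 ..
      qed
      define c :: "real ^ ('a rel)" where "c = (\<chi> r. if r \<in> L then F i r else 0)"
      have "c \<in> C" unfolding C_def c_def using ip by auto
      hence "a \<bullet> c \<le> b" using aC by blast
      moreover have "a \<bullet> c = (\<Sum>r\<in>UNIV. if r \<in> L then a$r * F i r else 0)"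
        unfolding inner_vec_def c_def by (intro sum.cong refl) auto
      moreover have "\<dots> = (\<Sum>r\<in>L. a$r * F i r)"
        by (simp add: sum.inter_restrict[symmetric])
      moreover have "\<dots> = (\<Sum>r\<in>L. (if r = r0 then k * a$r else 0) - k * (a$r * m A r r0))"
        unfolding Fi by (intro sum.cong refl) (auto simp: algebra_simps)
      moreover have "\<dots> = k * (a$r0 - (\<Sum>r\<in>L. a$r * m A r r0))"
        using r0 by (simp add: sum_subtractf sum_distrib_left algebra_simps)
      ultimately show ?thesis by simp
    qed
    hence "a$r0 - (\<Sum>r\<in>L. a$r * m A r r0) \<le> 0" by (rule pos_scale_le)
    thus ?thesis unfolding \<nu>_def by (simp add: sum_negf)
  qed
  have eq: "(\<Sum>r\<in>L. \<nu> r * m A r r0) = \<nu> r0" if A: "A \<in> menus2" and r0: "r0 \<in> L" for A r0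
  proof (rule ccontr)
    assume ne: "\<not> ?thesis"
    have "(\<Sum>r0\<in>L. \<Sum>r\<in>L. \<nu> r * m A r r0) < (\<Sum>r0\<in>L. \<nu> r0)"
    proof (rule sum_strict_mono_ex1)
      show "finite L" by simp
      show "\<forall>x\<in>L. (\<Sum>r\<in>L. \<nu> r * m A r x) \<le> \<nu> x" using ineq A by blast
      show "\<exists>x\<in>L. (\<Sum>r\<in>L. \<nu> r * m A r x) < \<nu> x"
        using ineq[OF A r0] ne r0 by force
    qed
    also have "(\<Sum>r0\<in>L. \<Sum>r\<in>L. \<nu> r * m A r r0) = (\<Sum>r\<in>L. \<nu> r * (\<Sum>r0\<in>L. m A r r0))"
      by (subst sum.swap) (simp add: sum_distrib_left)
    also have "\<dots> = (\<Sum>r\<in>L. \<nu> r)" using rowsum by simp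
    finally show False by simp
  qed
  obtain r2 where "a$r2 \<noteq> 0" using a0 by (metis vec_eq_iff zero_index)
  hence r2: "r2 \<in> L" "\<nu> r2 > 0" using offL nonpos[of r2] unfolding \<nu>_def by force+
  define S where "S = (\<Sum>r\<in>L. \<nu> r)"
  have Spos: "S > 0" unfolding S_def using r2 nu0 by (intro sum_pos2) auto
  define f where "f r = (if r \<in> L then \<nu> r / S else 0)" for r
  have f0: "\<And>r. 0 \<le> f r" unfolding f_def using nu0 Spos by simp
  have "(\<Sum>r\<in>UNIV. f r) = (\<Sum>r\<in>L. \<nu> r / S)"
    unfolding f_def by (simp add: sum.inter_restrict[symmetric])
  also have "\<dots> = 1" using Spos unfolding S_def by (simp add: sum_divide_distrib[symmetric])
  finally have fs: "(\<Sum>r\<in>UNIV. f r) = 1" .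
  have int1: "(\<integral>\<^sup>+ x. ennreal (f x) \<partial>count_space UNIV) = 1"
    by (simp add: nn_integral_count_space_finite sum_ennreal f0 fs)
  define \<mu> where "\<mu> = embed_pmf f"
  have pm: "pmf \<mu> r = f r" for r unfolding \<mu>_def using pmf_embed_pmf[OF f0 int1] .
  have "set_pmf \<mu> \<subseteq> linorders"
    unfolding \<mu>_def set_embed_pmf[OF f0 int1] f_def L_def by auto
  moreover have "\<forall>A\<in>menus2. \<forall>r'\<in>linorders.
        (\<Sum>r\<in>linorders. pmf \<mu> r * markov_entry t A r r') = pmf \<mu> r'"
  proof (intro ballI)
    fix A :: "'a set" and r' :: "'a rel" assume A: "A \<in> menus2" and r': "r' \<in> linorders"
    have "(\<Sum>r\<in>L. pmf \<mu> r * m A r r') = (\<Sum>r\<in>L. (\<nu> r * m A r r') / S)"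
      unfolding pm f_def by (intro sum.cong refl) auto
    also have "\<dots> = \<nu> r' / S" using eq[OF A] r' unfolding L_def
      by (simp add: sum_divide_distrib[symmetric])
    also have "\<dots> = pmf \<mu> r'" using r' unfolding pm f_def L_def by simp
    finally show "(\<Sum>r\<in>linorders. pmf \<mu> r * markov_entry t A r r') = pmf \<mu> r'"
      unfolding L_def m_def .
  qed
  ultimately show ?thesis unfolding menu_invariant_def by blast
qed

theorem theorem9:
  fixes t :: "'a::finite \<Rightarrow> 'a rel \<Rightarrow> 'a rel pmf"
  assumes "transition_fun t"
  shows "menu_invariant t \<longleftrightarrow> no_weak_investment t"
  using forward backward assms by blast

end
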